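(* For every ranking profile $R$ over $m\geq 2$ candidates, every ranking $\rhd$ chosen by the Chamberlin-Courant SWF satisfies unanimous justified representation (uJR) for $R$, i.e., $u(\succ,\rhd)\geq 1$ for every $\succ\in\mathcal{R}$ with $R(\succ)\geq 1/\binom{m}{2}$.
   Context: Let $C=\{x_1,\dots,x_m\}$ be a set of $m$ candidates. A ranking is a strict linear order over $C$; $\mathcal{R}$ denotes the set of all rankings over $C$. A ranking profile is a function $R:\mathcal{R}\to[0,1]$ with $\sum_{\succ\in\mathcal{R}}R(\succ)=1$. For rankings $\succ,\rhd$, $u(\succ,\rhd)=|\{(x,y)\in C^2: x\succ y \text{ and } x\rhd y\}|$. Let $s:\mathbb{N}_0\to\mathbb{R}$ with $s(0)=0$ and $s(k)=1$ for $k>0$. The Chamberlin-Courant SWF chooses a ranking $\rhd\in\mathcal{R}$ maximizing $\sum_{\succ\in\mathcal{R}}R(\succ)\,s(u(\succ,\rhd))$ (ties broken arbitrarily). *)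

theory Defs
  imports Complex_Main "HOL-Library.Cardinality"
begin

text \<open>Candidates are the elements of a finite type 'a; a ranking is a strict
linear order on all candidates, represented as the relation of pairs (x,y) with x ranked above y.\<close>

definition rankings :: "('a \<times> 'a) set set" where
  "rankings = {r. strict_linear_order_on UNIV r}"

definition agree :: "('a \<times> 'a) set \<Rightarrow> ('a \<times> 'a) set \<Rightarrow> nat" where
  "agree r t = card {(x, y). (x, y) \<in> r \<and> (x, y) \<in> t}"

definition s_cc :: "nat \<Rightarrow> real" where
  "s_cc k = (if k = 0 then 0 else 1)"

definition ranking_profile :: "(('a \<times> 'a) set \<Rightarrow> real) \<Rightarrow> bool" where
  "ranking_profile R \<longleftrightarrow> (\<forall>r\<in>rankings. 0 \<le> R r \<and> R r \<le> 1) \<and> (\<Sum>r\<in>rankings. R r) = 1"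

definition cc_score :: "(('a \<times> 'a) set \<Rightarrow> real) \<Rightarrow> ('a \<times> 'a) set \<Rightarrow> real" where
  "cc_score R t = (\<Sum>r\<in>rankings. R r * s_cc (agree r t))"

text \<open>Rankings chosen by the Chamberlin-Courant SWF (all maximizers; ties arbitrary).\<close>
definition cc_chosen :: "(('a \<times> 'a) set \<Rightarrow> real) \<Rightarrow> ('a \<times> 'a) set \<Rightarrow> bool" where
  "cc_chosen R t \<longleftrightarrow> t \<in> rankings \<and> (\<forall>t'\<in>rankings. cc_score R t' \<le> cc_score R t)"

end

theory Submission
  imports Defs
begin

definition perms :: "'a set \<Rightarrow> 'a list set" where
  "perms A = {xs. length xs = card A \<and> distinct xs \<and> set xs \<subseteq> A}"

lemma perms_set: "xs \<in> perms (UNIV::'a::finite set) \<Longrightarrow> distinct xs \<and> set xs = UNIV"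
proof -
  assume "xs \<in> perms (UNIV::'a set)"
  hence d: "distinct xs" and l: "length xs = CARD('a)" by (auto simp: perms_def)
  have "card (set xs) = CARD('a)" using distinct_card[OF d] l by simp
  hence "set xs = UNIV" using card_subset_eq[of UNIV "set xs"] by simp
  with d show ?thesis by simp
qed

lemma card_perms: "card (perms (UNIV::'a::finite set)) = fact CARD('a)"
  unfolding perms_def
  by (subst card_lists_distinct_length_eq) (auto simp: fact_prod)

definition rel_of :: "'a list \<Rightarrow> ('a \<times> 'a) set" where
  "rel_of xs = {(x,y). \<exists>i j. i < j \<and> j < length xs \<and> xs!i = x \<and> xs!j = y}"

lemma rel_of_rank:
  assumes "distinct (xs::'a::finite list)" "set xs = UNIV"
  shows "rel_of xs \<in> rankings"
  unfolding rankings_def strict_linear_order_on_def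
proof (intro CollectI conjI)
  show "trans (rel_of xs)"
  proof (rule transI)
    fix x y z assume "(x, y) \<in> rel_of xs" "(y, z) \<in> rel_of xs"
    then obtain i j k l where "i < j" "j < length xs" "xs!i = x" "xs!j = y"
      "k < l" "l < length xs" "xs!k = y" "xs!l = z" unfolding rel_of_def by blast
    moreover have "j = k" using calculation assms(1) by (metis nth_eq_iff_index_eq order.strict_trans)
    ultimately have "i < l" "l < length xs" "xs!i = x" "xs!l = z" by auto
    then show "(x, z) \<in> rel_of xs" unfolding rel_of_def by blast
  qed
  show "irrefl (rel_of xs)"
    unfolding irrefl_def rel_of_def using assms(1)
    by (auto simp: nth_eq_iff_index_eq)
  show "total_on UNIV (rel_of xs)"
    unfolding total_on_def rel_of_def
  proof (intro ballI impI)
    fix x y :: 'a assume "x \<noteq> y"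
    obtain i where i: "i < length xs" "xs!i = x" using assms(2) by (metis UNIV_I in_set_conv_nth)
    obtain j where j: "j < length xs" "xs!j = y" using assms(2) by (metis UNIV_I in_set_conv_nth)
    have "i \<noteq> j" using i j \<open>x \<noteq> y\<close> by auto
    then show "(x, y) \<in> {(x, y). \<exists>i j. i < j \<and> j < length xs \<and> xs ! i = x \<and> xs ! j = y} \<or>
           (y, x) \<in> {(x, y). \<exists>i j. i < j \<and> j < length xs \<and> xs ! i = x \<and> xs ! j = y}"
    proof (cases "i < j")
      case True
      then show ?thesis using i j by blast
    next
      case False
      then have "j < i" using \<open>i \<noteq> j\<close> by simp
      then show ?thesis using i j by blast
    qed
  qed
qed

lemma rel_of_pc:
  assumes "distinct xs" "i < length xs"
  shows "card {y. (y, xs!i) \<in> rel_of xs} = i"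
proof -
  have "{y. (y, xs!i) \<in> rel_of xs} = (\<lambda>k. xs!k) ` {..<i}"
    using assms unfolding rel_of_def
    by (auto simp: nth_eq_iff_index_eq)
  moreover have "inj_on (\<lambda>k. xs!k) {..<i}"
    using assms by (auto simp: inj_on_def nth_eq_iff_index_eq)
  ultimately show ?thesis by (simp add: card_image)
qed

lemma rel_of_inj:
  "inj_on rel_of (perms (UNIV::'a::finite set))"
proof (rule inj_onI)
  fix xs ys :: "'a list"
  assume xs: "xs \<in> perms UNIV" and ys: "ys \<in> perms UNIV"
    and eq: "rel_of xs = rel_of ys"
  have dx: "distinct xs" "set xs = UNIV" and dy: "distinct ys" "set ys = UNIV"
    using perms_set[OF xs] perms_set[OF ys] by auto
  have len: "length xs = length ys"
    using dx dy by (metis distinct_card)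
  show "xs = ys"
  proof (rule nth_equalityI[OF len])
    fix i assume i: "i < length xs"
    obtain k where k: "k < length ys" "ys!k = xs!i" using dy(2) by (metis UNIV_I in_set_conv_nth)
    have "i = card {y. (y, xs!i) \<in> rel_of xs}" using rel_of_pc[OF dx(1) i] by simp
    also have "\<dots> = card {y. (y, ys!k) \<in> rel_of ys}" using eq k by simp
    also have "\<dots> = k" using rel_of_pc[OF dy(1) k(1)] .
    finally show "xs!i = ys!i" using k by simp
  qed
qed

lemma card_rankings: "fact CARD('a::finite) \<le> card (rankings :: ('a \<times> 'a) set set)"
proof -
  have "fact CARD('a) = card (perms (UNIV::'a set))" by (simp add: card_perms)
  also have "\<dots> = card (rel_of ` perms (UNIV::'a set))"
    by (rule card_image[symmetric]) (rule rel_of_inj)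
  also have "\<dots> \<le> card (rankings :: ('a \<times> 'a) set set)"
    by (rule card_mono) (auto dest: perms_set intro: rel_of_rank)
  finally show ?thesis .
qed

lemma agree0_conv:
  assumes r: "r \<in> rankings" and t: "(t::('a::finite \<times> 'a) set) \<in> rankings"
    and a: "agree r t = 0"
  shows "r = converse t"
proof -
  have fin: "finite {(x, y). (x, y) \<in> r \<and> (x, y) \<in> t}" by simp
  have dis: "\<And>x y. (x,y) \<in> r \<Longrightarrow> (x,y) \<notin> t"
    using a fin unfolding agree_def by auto
  have r': "irrefl r" "total_on UNIV r" and t': "irrefl t" "total_on UNIV t"
    using r t by (auto simp: rankings_def strict_linear_order_on_def)
  show ?thesis
  proof (intro set_eqI iffI)
    fix p assume p: "p \<in> r"
    obtain x y where [simp]: "p = (x,y)" by (cases p)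
    have "x \<noteq> y" using p r' by (auto simp: irrefl_def)
    then show "p \<in> converse t" using t' dis p by (auto simp: total_on_def)
  next
    fix p assume p: "p \<in> converse t"
    obtain x y where [simp]: "p = (x,y)" by (cases p)
    have "x \<noteq> y" using p t' by (auto simp: irrefl_def)
    then show "p \<in> r" using r' dis p by (auto simp: total_on_def)
  qed
qed

lemma converse_rank: "t \<in> rankings \<Longrightarrow> converse t \<in> rankings"
  by (auto simp: rankings_def strict_linear_order_on_def total_on_def irrefl_def trans_def)

lemma score_ge:
  fixes R :: "('a::finite \<times> 'a) set \<Rightarrow> real"
  assumes R: "ranking_profile R" and t: "(t::('a::finite \<times> 'a) set) \<in> rankings"
  shows "cc_score R t \<ge> 1 - R (converse t)"
proof -
  have "cc_score R t = (\<Sum>r\<in>rankings. R r * s_cc (agree r t))" by (simp add: cc_score_def)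
  also have "\<dots> \<ge> (\<Sum>r\<in>rankings. R r - (if r = converse t then R r else 0))"
  proof (rule sum_mono)
    fix r :: "('a \<times> 'a) set" assume r: "r \<in> rankings"
    show "R r - (if r = converse t then R r else 0) \<le> R r * s_cc (agree r t)"
      using agree0_conv[OF r t] R r unfolding ranking_profile_def s_cc_def by auto
  qed
  moreover have "(\<Sum>r\<in>rankings. R r - (if r = converse t then R r else 0)) = 1 - R (converse t)"
    using R converse_rank[OF t] by (simp add: sum_subtractf ranking_profile_def sum.delta)
  ultimately show ?thesis by simp
qed

lemma score_le:
  fixes R :: "('a::finite \<times> 'a) set \<Rightarrow> real"
  assumes R: "ranking_profile R" and r: "r \<in> rankings" and a: "agree r (t::('a::finite \<times> 'a) set) = 0"
  shows "cc_score R t \<le> 1 - R r"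
proof -
  have "cc_score R t = (\<Sum>r'\<in>rankings. R r' * s_cc (agree r' t))" by (simp add: cc_score_def)
  also have "\<dots> \<le> (\<Sum>r'\<in>rankings. R r' - (if r' = r then R r' else 0))"
  proof (rule sum_mono)
    fix r' :: "('a \<times> 'a) set" assume r': "r' \<in> rankings"
    show "R r' * s_cc (agree r' t) \<le> R r' - (if r' = r then R r' else 0)"
      using R r' a unfolding ranking_profile_def s_cc_def by auto
  qed
  also have "(\<Sum>r'\<in>rankings. R r' - (if r' = r then R r' else 0)) = 1 - R r"
    using R r by (simp add: sum_subtractf ranking_profile_def sum.delta)
  finally show ?thesis .
qed

lemma choose2_lt_fact: "(n::nat) \<ge> 2 \<Longrightarrow> n choose 2 < fact n"
proof -
  assume n: "n \<ge> 2"
  then obtain k where k: "n = Suc (Suc k)" by (metis add_2_eq_Suc le_Suc_ex)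
  have "n choose 2 = n * (n - 1) div 2" by (simp add: choose_two)
  also have "\<dots> < n * (n - 1)" using k by simp
  also have "n * (n - 1) \<le> fact n"
  proof -
    have "n - 1 \<le> fact (n - 1)" by (rule fact_ge_self)
    hence "n * (n - 1) \<le> n * fact (n - 1)" by simp
    also have "\<dots> = fact n" using k by (simp add: fact_Suc)
    finally show ?thesis .
  qed
  finally show ?thesis by simp
qed

theorem mainTheorem2:
  fixes R :: "('a::finite \<times> 'a) set \<Rightarrow> real" and t :: "('a \<times> 'a) set"
  assumes "CARD('a) \<ge> 2"
    and "ranking_profile R"
    and "cc_chosen R t"
  shows "\<forall>r\<in>rankings. R r \<ge> 1 / real (CARD('a) choose 2) \<longrightarrow> agree r t \<ge> 1"
proof (intro ballI impI)
  fix r :: "('a \<times> 'a) set" assume r: "r \<in> rankings" and big: "R r \<ge> 1 / real (CARD('a) choose 2)"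
  show "agree r t \<ge> 1"
  proof (rule ccontr)
    assume "\<not> agree r t \<ge> 1"
    hence a: "agree r t = 0" by simp
    have t: "t \<in> rankings" using assms(3) by (simp add: cc_chosen_def)
    have minR: "R r \<le> R r'" if r': "r' \<in> rankings" for r'
    proof -
      have c: "converse r' \<in> rankings" using converse_rank[OF r'] .
      have "1 - R r' \<le> cc_score R (converse r')" using score_ge[OF assms(2) c] by simp
      also have "\<dots> \<le> cc_score R t" using assms(3) c by (simp add: cc_chosen_def)
      also have "\<dots> \<le> 1 - R r" using score_le[OF assms(2) r a] .
      finally show ?thesis by simp
    qed
    let ?c = "real (CARD('a) choose 2)"
    have cpos: "?c > 0" using assms(1) by simp
    have lt: "?c < real (card (rankings :: ('a \<times> 'a) set set))"
      using choose2_lt_fact[OF assms(1)] card_rankings[where 'a='a]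
      by (metis le_trans less_le_not_le not_le of_nat_less_iff)
    have "real (card (rankings :: ('a \<times> 'a) set set)) * R r = (\<Sum>r'\<in>(rankings :: ('a \<times> 'a) set set). R r)" by simp
    also have "\<dots> \<le> (\<Sum>r'\<in>rankings. R r')" by (rule sum_mono) (rule minR)
    also have "\<dots> = 1" using assms(2) by (simp add: ranking_profile_def)
    finally have le1: "real (card (rankings :: ('a \<times> 'a) set set)) * R r \<le> 1" .
    have "1 \<le> ?c * R r" using big cpos by (simp add: field_simps)
    also have "\<dots> < real (card (rankings :: ('a \<times> 'a) set set)) * R r"
      using lt big cpos by (intro mult_strict_right_mono) (auto intro: less_le_trans[OF _ big])
    finally show False using le1 by simp
  qed
qed

end
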